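(* Consider a peer-to-peer overlay network (as described in the context) under unlimited adversarial churn. If the overlay topology maintained by an algorithm is not a complete (fully connected) graph, then there does not exist an algorithm that maintains this topology and is resilient against (i.e., correctly handles) unlimited adversarial churn.
   Context: A peer-to-peer overlay network is a set of processes with unique identifiers communicating by asynchronous message passing over FIFO channels of unlimited capacity. A process $a$ is a neighbor of process $b$ if $b$ stores the identifier of $a$ in its memory; a process may send messages (point-to-point only, no broadcast) only to processes whose identifiers it stores, message routing being done by the underlay. An algorithm maintains a particular overlay topology (a graph on the current processes given by the neighbor relation). Since connectivity is maintained only by stored identifiers, once the overlay network becomes disconnected it cannot reconnect; hence a correct algorithm must never let the overlay network become disconnected, whether through its own actions or through churn. Churn is the joining and leaving of processes. In adversarial churn, a leaving process simply exits the overlay network without taking any further algorithm steps (messages in its incoming channels are lost). Churn is unlimited if the number of concurrent churn requests (joins/leaves) is not bounded by any constant, known or unknown to the algorithm; in particular, any set of processes currently in the overlay network may leave concurrently. A cut-set of a topology is a proper subset of the processes whose removal (together with incident edges) disconnects the network. *)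

theory Defs
  imports Main
begin

record ('p, 'l, 'm) conf =
  procs :: "'p set"
  loc   :: "'p \<Rightarrow> 'l"
  chan  :: "'p \<Rightarrow> 'p \<Rightarrow> 'm list"     \<comment> \<open>FIFO channel from first to second process\<close>

text \<open>An algorithm: which identifiers a local state stores, the local state of the
  first process, the local state of a process p joining via contact q, and the
  (nondeterministic) local actions, optionally triggered by receipt of a message,
  producing a new local state and a list of point-to-point messages to send.\<close>

record ('p, 'l, 'm) alg =
  ids        :: "'l \<Rightarrow> 'p set"
  start      :: "'p \<Rightarrow> 'l"
  join_state :: "'p \<Rightarrow> 'p \<Rightarrow> 'l"
  act        :: "'p \<Rightarrow> 'l \<Rightarrow> 'm option \<Rightarrow> ('l \<times> ('p \<times> 'm) list) set"

text \<open>Appending sent messages to the FIFO channels (messages to non-members are lost).\<close>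
fun deliver :: "'p set \<Rightarrow> ('p \<Rightarrow> 'p \<Rightarrow> 'm list) \<Rightarrow> 'p \<Rightarrow> ('p \<times> 'm) list \<Rightarrow> ('p \<Rightarrow> 'p \<Rightarrow> 'm list)" where
  "deliver P ch src [] = ch"
| "deliver P ch src ((d, m) # ms) =
     deliver P (if d \<in> P then ch(src := (ch src)(d := ch src d @ [m])) else ch) src ms"

inductive alg_step :: "('p, 'l, 'm) alg \<Rightarrow> ('p, 'l, 'm) conf \<Rightarrow> ('p, 'l, 'm) conf \<Rightarrow> bool"
  for A where
  recv: "\<lbrakk> p \<in> procs C; chan C q p = m # rest;
           (l', out) \<in> act A p (loc C p) (Some m); fst ` set out \<subseteq> ids A l' \<rbrakk> \<Longrightarrow>
         alg_step A C (C\<lparr> loc := (loc C)(p := l'),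
                          chan := deliver (procs C) ((chan C)(q := (chan C q)(p := rest))) p out \<rparr>)"
| spont: "\<lbrakk> p \<in> procs C; (l', out) \<in> act A p (loc C p) None; fst ` set out \<subseteq> ids A l' \<rbrakk> \<Longrightarrow>
         alg_step A C (C\<lparr> loc := (loc C)(p := l'), chan := deliver (procs C) (chan C) p out \<rparr>)"

text \<open>Leave: an arbitrary (unboundedly large) set S of processes leaves
  concurrently, without taking further steps; messages in their incoming channels are lost.\<close>
inductive churn_step :: "('p, 'l, 'm) alg \<Rightarrow> ('p, 'l, 'm) conf \<Rightarrow> ('p, 'l, 'm) conf \<Rightarrow> bool"
  for A where
  leave: "S \<subseteq> procs C \<Longrightarrow>
          churn_step A C (C\<lparr> procs := procs C - S,
                             chan := (\<lambda>x y. if y \<in> S then [] else chan C x y) \<rparr>)"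
| join: "\<lbrakk> p \<notin> procs C; q \<in> procs C \<rbrakk> \<Longrightarrow>
          churn_step A C (C\<lparr> procs := insert p (procs C),
                             loc := (loc C)(p := join_state A p q),
                             chan := (\<lambda>x y. if x = p \<or> y = p then [] else chan C x y) \<rparr>)"

definition init_conf :: "('p, 'l, 'm) alg \<Rightarrow> ('p, 'l, 'm) conf \<Rightarrow> bool" where
  "init_conf A C \<longleftrightarrow> (\<exists>p. C = \<lparr> procs = {p}, loc = start A, chan = (\<lambda>_ _. []) \<rparr>)"

definition reachable :: "('p, 'l, 'm) alg \<Rightarrow> ('p, 'l, 'm) conf \<Rightarrow> bool" where
  "reachable A C \<longleftrightarrow>
     (\<exists>C0. init_conf A C0 \<and> (\<lambda>X Y. alg_step A X Y \<or> churn_step A X Y)\<^sup>*\<^sup>* C0 C)"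

definition overlay_edges :: "('p, 'l, 'm) alg \<Rightarrow> ('p, 'l, 'm) conf \<Rightarrow> ('p \<times> 'p) set" where
  "overlay_edges A C = {(x, y). x \<in> procs C \<and> y \<in> procs C \<and> x \<noteq> y \<and>
                          (x \<in> ids A (loc C y) \<or> y \<in> ids A (loc C x))}"

definition overlay_connected :: "('p, 'l, 'm) alg \<Rightarrow> ('p, 'l, 'm) conf \<Rightarrow> bool" where
  "overlay_connected A C \<longleftrightarrow> (\<forall>x\<in>procs C. \<forall>y\<in>procs C. (x, y) \<in> (overlay_edges A C)\<^sup>*)"

text \<open>A topology assigns to each (finite) set of processes the edge set of a graph on it.\<close>
type_synonym 'p topology = "'p set \<Rightarrow> ('p \<times> 'p) set"

definition complete_topology :: "'p topology \<Rightarrow> bool" where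
  "complete_topology T \<longleftrightarrow>
     (\<forall>V. finite V \<longrightarrow> (\<forall>x\<in>V. \<forall>y\<in>V. x \<noteq> y \<longrightarrow> (x, y) \<in> T V))"

text \<open>The algorithm maintains T: from every reachable configuration, once churn stops,
  algorithm steps lead to a configuration whose overlay network is T on its process set.\<close>
definition maintains :: "('p, 'l, 'm) alg \<Rightarrow> 'p topology \<Rightarrow> bool" where
  "maintains A T \<longleftrightarrow>
     (\<forall>C. reachable A C \<longrightarrow>
        (\<exists>C'. (alg_step A)\<^sup>*\<^sup>* C C' \<and> overlay_edges A C' = T (procs C')))"

text \<open>Correctly handling unlimited adversarial churn: the overlay network never becomes
  disconnected in any execution (any interleaving of algorithm steps and churn).\<close>
definition resilient_unlimited_churn :: "('p, 'l, 'm) alg \<Rightarrow> bool" where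
  "resilient_unlimited_churn A \<longleftrightarrow> (\<forall>C. reachable A C \<longrightarrow> overlay_connected A C)"

end

theory Submission
  imports Defs
begin

lemma reach_step:
  assumes "reachable A C" "alg_step A C D \<or> churn_step A C D"
  shows "reachable A D"
proof -
  obtain C0 where "init_conf A C0" "(\<lambda>X Y. alg_step A X Y \<or> churn_step A X Y)\<^sup>*\<^sup>* C0 C"
    using assms(1) unfolding reachable_def by blast
  moreover have "(\<lambda>X Y. alg_step A X Y \<or> churn_step A X Y)\<^sup>*\<^sup>* C0 D"
    using calculation(2) assms(2) by (rule rtranclp.rtrancl_into_rtrancl)
  ultimately show ?thesis unfolding reachable_def by blast
qed

lemma reach_steps:
  assumes "(alg_step A)\<^sup>*\<^sup>* C D" "reachable A C"
  shows "reachable A D"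
  using assms by (induction rule: rtranclp_induct) (auto intro: reach_step)

lemma alg_procs:
  assumes "(alg_step A)\<^sup>*\<^sup>* C D"
  shows "procs D = procs C"
  using assms by (induction rule: rtranclp_induct) (auto elim: alg_step.cases)

lemma reach_V:
  assumes "finite V" "V \<noteq> {}"
  shows "\<exists>C. reachable A C \<and> procs C = V"
  using assms
proof (induction V rule: finite_ne_induct)
  case (singleton p)
  let ?C = "\<lparr> procs = {p}, loc = start A, chan = (\<lambda>_ _. []) \<rparr> :: ('a,'b,'c) conf"
  have "reachable A ?C" unfolding reachable_def init_conf_def by blast
  then show ?case by (intro exI[of _ ?C]) simp
next
  case (insert p F)
  then obtain C where C: "reachable A C" "procs C = F" by blast
  from insert obtain q where "q \<in> F" by blast
  then have "churn_step A C (C\<lparr> procs := insert p (procs C),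
                             loc := (loc C)(p := join_state A p q),
                             chan := (\<lambda>x y. if x = p \<or> y = p then [] else chan C x y) \<rparr>)"
    using C insert by (intro churn_step.join) auto
  then show ?case using C reach_step by fastforce
qed

theorem theorem1:
  fixes T :: "'p topology"
  assumes "\<not> complete_topology T"
  shows "\<not> (\<exists>A :: ('p, 'l, 'm) alg. maintains A T \<and> resilient_unlimited_churn A)"
proof
  assume "\<exists>A :: ('p, 'l, 'm) alg. maintains A T \<and> resilient_unlimited_churn A"
  then obtain A :: "('p, 'l, 'm) alg" where M: "maintains A T" and R: "resilient_unlimited_churn A"
    by blast
  from assms obtain V x y where V: "finite V" "x \<in> V" "y \<in> V" "x \<noteq> y" "(x, y) \<notin> T V"
    unfolding complete_topology_def by blast
  obtain C where C: "reachable A C" "procs C = V" using reach_V[OF V(1)] V(2) by blast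
  obtain C' where C': "(alg_step A)\<^sup>*\<^sup>* C C'" "overlay_edges A C' = T (procs C')"
    using M C unfolding maintains_def by blast
  have pC': "procs C' = V" using alg_procs[OF C'(1)] C by simp
  have rC': "reachable A C'" using reach_steps C'(1) C(1) by blast
  have ne: "x \<notin> ids A (loc C' y) \<and> y \<notin> ids A (loc C' x)"
    using C'(2) pC' V unfolding overlay_edges_def by auto
  define S where "S = V - {x, y}"
  define D where "D = (C'\<lparr> procs := procs C' - S,
                             chan := (\<lambda>a b. if b \<in> S then [] else chan C' a b) \<rparr>)"
  have "churn_step A C' D" unfolding D_def S_def using pC' by (intro churn_step.leave) auto
  then have "reachable A D" using rC' reach_step by blast
  then have conn: "overlay_connected A D" using R unfolding resilient_unlimited_churn_def by blast
  have pD: "procs D = {x, y}" unfolding D_def S_def using pC' V by auto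
  have "overlay_edges A D = {}"
    using ne pD unfolding overlay_edges_def D_def by auto
  moreover have "(x, y) \<in> (overlay_edges A D)\<^sup>*" using conn pD unfolding overlay_connected_def by auto
  ultimately show False using V(4) by simp
qed

end
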